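(* Let $T$ be a perfect binary tree with $n\ge2$ nodes and nonnegative node weights $(x_v)$, let $1\le k\le n$, $\epsilon>0$, and $\mathrm{OPT}=\min_{\Omega\in\mathbb{T}_k}\sum_{v\notin\Omega}x_v$. Let $W>0$ satisfy $\mathrm{OPT}\le W\le \log_2 n\cdot\mathrm{OPT}$. Define $\hat x_v=\lceil x_v n\log_2 n/(\epsilon W)\rceil$ if $x_v\le W$ and $\hat x_v=\lceil n\log_2 n/\epsilon\rceil+n$ if $x_v>W$. Let $\hat\Omega\in\mathbb{T}_k$ minimize $\sum_{v\notin\Omega}\hat x_v$ over $\Omega\in\mathbb{T}_k$. Then $\sum_{v\notin\hat\Omega}x_v\le(1+\epsilon)\mathrm{OPT}$.
   Context: $\mathbb{T}_k$ denotes the family of node sets $\Omega\subseteq T$ that contain the root, are closed under taking parents, and satisfy $|\Omega|\le k$. *)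

theory Defs
  imports Complex_Main
begin

text \<open>A perfect binary tree with n nodes is represented in heap order:
  nodes are 1..n, the root is 1, the parent of node v > 1 is v div 2,
  and n = 2^(h+1) - 1 for the height h.\<close>

definition perfect_binary_tree_size :: "nat \<Rightarrow> bool" where
  "perfect_binary_tree_size n \<longleftrightarrow> (\<exists>h. n = 2 ^ (h + 1) - 1)"

definition tree_nodes :: "nat \<Rightarrow> nat set" where
  "tree_nodes n = {1..n}"

definition tree_root :: nat where
  "tree_root = 1"

definition tree_parent :: "nat \<Rightarrow> nat" where
  "tree_parent v = v div 2"

definition rooted_subtrees :: "nat \<Rightarrow> nat \<Rightarrow> nat set set" where
  "rooted_subtrees n k = {\<Omega>. \<Omega> \<subseteq> tree_nodes n \<and> tree_root \<in> \<Omega> \<and>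
      (\<forall>v\<in>\<Omega>. v \<noteq> tree_root \<longrightarrow> tree_parent v \<in> \<Omega>) \<and> card \<Omega> \<le> k}"

definition tree_cost :: "nat \<Rightarrow> (nat \<Rightarrow> real) \<Rightarrow> nat set \<Rightarrow> real" where
  "tree_cost n x \<Omega> = (\<Sum>v\<in>tree_nodes n - \<Omega>. x v)"

definition OPT :: "nat \<Rightarrow> nat \<Rightarrow> (nat \<Rightarrow> real) \<Rightarrow> real" where
  "OPT n k x = Min (tree_cost n x ` rooted_subtrees n k)"

definition rounded_weight :: "nat \<Rightarrow> real \<Rightarrow> real \<Rightarrow> (nat \<Rightarrow> real) \<Rightarrow> nat \<Rightarrow> real" where
  "rounded_weight n \<epsilon> W x v =
     (if x v \<le> W then real_of_int \<lceil>x v * real n * log 2 (real n) / (\<epsilon> * W)\<rceil>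
      else real_of_int \<lceil>real n * log 2 (real n) / \<epsilon>\<rceil> + real n)"

end

theory Submission
  imports Defs
begin

theorem lemma13:
  fixes n k :: nat and x :: "nat \<Rightarrow> real" and \<epsilon> W :: real and \<Omega>h :: "nat set"
  assumes "perfect_binary_tree_size n" and "n \<ge> 2"
    and "\<forall>v\<in>tree_nodes n. x v \<ge> 0"
    and "1 \<le> k" and "k \<le> n" and "\<epsilon> > 0"
    and "W > 0" and "OPT n k x \<le> W" and "W \<le> log 2 (real n) * OPT n k x"
    and "\<Omega>h \<in> rooted_subtrees n k"
    and "\<forall>\<Omega>\<in>rooted_subtrees n k.
           tree_cost n (rounded_weight n \<epsilon> W x) \<Omega>h \<le> tree_cost n (rounded_weight n \<epsilon> W x) \<Omega>"
  shows "tree_cost n x \<Omega>h \<le> (1 + \<epsilon>) * OPT n k x"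
proof -
  note a = assms
  define R where "R = rounded_weight n \<epsilon> W x"
  define L where "L = log 2 (real n)"
  define c where "c = real n * L / (\<epsilon> * W)"
  have L1: "L \<ge> 1" unfolding L_def using a(2) by simp
  have cpos: "c > 0" unfolding c_def using L1 a(2,6,7) by simp
  have fin: "finite (rooted_subtrees n k)"
    by (rule finite_subset[of _ "Pow (tree_nodes n)"]) (auto simp: rooted_subtrees_def tree_nodes_def)
  have ne: "{1} \<in> rooted_subtrees n k"
    using a(2,4) by (auto simp: rooted_subtrees_def tree_nodes_def tree_root_def)
  obtain \<Omega>s where s: "\<Omega>s \<in> rooted_subtrees n k" "tree_cost n x \<Omega>s = OPT n k x"
  proof -
    have "OPT n k x \<in> tree_cost n x ` rooted_subtrees n k"
      unfolding OPT_def using fin ne by (intro Min_in) auto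
    then show ?thesis using that by auto
  qed
  have finT: "finite (tree_nodes n - A)" for A by (simp add: tree_nodes_def)
  have xle: "x v \<le> OPT n k x" if "v \<in> tree_nodes n - \<Omega>s" for v
  proof -
    have "x v \<le> (\<Sum>u\<in>tree_nodes n - \<Omega>s. x u)"
      by (rule member_le_sum) (use that a(3) finT in auto)
    then show ?thesis using s(2) by (simp add: tree_cost_def)
  qed
  have OPTnn: "OPT n k x \<ge> 0"
    using s(2) a(3) unfolding tree_cost_def by (metis Diff_iff sum_nonneg)
  have Rnn: "R v \<ge> 0" if "v \<in> tree_nodes n" for v
  proof -
    have "x v * real n * L / (\<epsilon> * W) \<ge> 0" using a(3) that L1 a(6,7) by simp
    moreover have "real n * L / \<epsilon> \<ge> 0" using L1 a(6) by simp
    ultimately show ?thesis unfolding R_def rounded_weight_def L_def[symmetric]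
      by (auto intro: order_trans[OF _ of_int_ceiling_le_add_one] )
  qed
  have Rup: "R v \<le> c * x v + 1" if "x v \<le> W" for v
  proof -
    have "R v = real_of_int \<lceil>c * x v\<rceil>" unfolding R_def rounded_weight_def c_def L_def
      using that by (simp add: field_simps)
    also have "\<dots> \<le> c * x v + 1" by (rule of_int_ceiling_le_add_one)
    finally show ?thesis .
  qed
  have Rlow: "R v \<ge> c * x v" if "x v \<le> W" for v
  proof -
    have "R v = real_of_int \<lceil>c * x v\<rceil>" unfolding R_def rounded_weight_def c_def L_def
      using that by (simp add: field_simps)
    then show ?thesis by simp
  qed
  have Rbig: "R v \<ge> c * W + real n" if "\<not> x v \<le> W" for v
  proof -
    have "R v = real_of_int \<lceil>c * W\<rceil> + real n" unfolding R_def rounded_weight_def c_def L_def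
      using that a(7) by (simp add: field_simps)
    then show ?thesis by simp
  qed
  have card: "card (tree_nodes n - \<Omega>s) \<le> n - 1"
  proof -
    have "1 \<in> \<Omega>s" "\<Omega>s \<subseteq> tree_nodes n" using s(1) by (auto simp: rooted_subtrees_def tree_root_def)
    then have "tree_nodes n - \<Omega>s \<subseteq> {2..n}" by (auto simp: tree_nodes_def) (metis One_nat_def Suc_1 Suc_leI le_neq_implies_less)
    then have "card (tree_nodes n - \<Omega>s) \<le> card {2..n}" by (intro card_mono) auto
    then show ?thesis by simp
  qed
  have costS: "tree_cost n R \<Omega>s \<le> c * OPT n k x + (real n - 1)"
  proof -
    have "tree_cost n R \<Omega>s \<le> (\<Sum>v\<in>tree_nodes n - \<Omega>s. c * x v + 1)"
      unfolding tree_cost_def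
      by (rule sum_mono) (use xle a(8) Rup in force)
    also have "\<dots> = c * tree_cost n x \<Omega>s + real (card (tree_nodes n - \<Omega>s))"
      by (simp add: sum.distrib sum_distrib_left tree_cost_def)
    also have "\<dots> \<le> c * OPT n k x + (real n - 1)"
      using card s(2) a(2) by (simp add: of_nat_diff)
    finally show ?thesis .
  qed
  have hS: "tree_cost n R \<Omega>h \<le> tree_cost n R \<Omega>s" using a(11) s(1) unfolding R_def by blast
  have small: "x v \<le> W" if v: "v \<in> tree_nodes n - \<Omega>h" for v
  proof (rule ccontr)
    assume nv: "\<not> x v \<le> W"
    have "R v \<le> tree_cost n R \<Omega>h" unfolding tree_cost_def
      by (rule member_le_sum) (use v Rnn finT in auto)
    moreover have "c * OPT n k x \<le> c * W" using a(8) cpos by simp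
    ultimately show False using Rbig[OF nv] hS costS by linarith
  qed
  have "c * tree_cost n x \<Omega>h \<le> tree_cost n R \<Omega>h"
    unfolding tree_cost_def sum_distrib_left
    by (rule sum_mono) (use small Rlow in auto)
  then have "c * tree_cost n x \<Omega>h \<le> c * OPT n k x + real n" using hS costS by linarith
  then have "tree_cost n x \<Omega>h \<le> OPT n k x + real n / c"
    using cpos by (simp add: field_simps)
  also have "real n / c = \<epsilon> * W / L" unfolding c_def using a(2) L1 by (simp add: field_simps)
  also have "\<dots> \<le> \<epsilon> * OPT n k x"
    using a(9) a(6) L1 unfolding L_def[symmetric] by (simp add: field_simps)
  finally show ?thesis by (simp add: algebra_simps)
qed

end
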